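(* Fix an iteration $t$, an agent $p$, and a noise realization $\xi\in\mathbb{R}^{J\times K}$. Let $w^{t+1},\lambda^t_p,z^t_p\in\mathbb{R}^{J\times K}$, $\rho^t>0$, $\delta^t>0$ be given and $$\Phi(z)=\langle f'_p(z^t_p;\mathcal{D}_p),z\rangle+\tfrac{\rho^t}{2}\big\|w^{t+1}-z+\tfrac1{\rho^t}(\lambda^t_p-\xi)\big\|^2 .$$ Let $z^{t+1}_p(\mathcal{D}_p)=\operatorname{argmin}_{z\in\mathcal{W}\cap\widehat{\mathcal{W}}^t_p}\Phi(z)$ where $\widehat{\mathcal{W}}^t_p=\{z:\|z-z^t_p\|\le\delta^t\}$, and for $\ell>0$ let $z^{t+1}_p(\ell,\mathcal{D}_p)=\operatorname{argmin}_{z\in\mathbb{R}^{J\times K}}\Phi(z)+\sum_{m=1}^M\ln(1+e^{\ell h^t_m(z)})$. Then $\lim_{\ell\to\infty}z^{t+1}_p(\ell,\mathcal{D}_p)=z^{t+1}_p(\mathcal{D}_p)$.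
   Context: $\mathbb{R}^{J\times K}$ carries the Frobenius inner product and norm. $f_p(\cdot;\mathcal{D}_p)$ is the local empirical risk $\frac1I\sum_i\varphi(z;x_{pi},y_{pi})+\frac\beta Pr(z)$ (convex loss $\varphi$, convex regularizer $r$, $\beta>0$) and $f'_p(z^t_p;\mathcal{D}_p)$ a subgradient at $z^t_p$. $\mathcal{W}\subset\mathbb{R}^{J\times K}$ is compact convex, and $\mathcal{W}\cap\widehat{\mathcal{W}}^t_p=\{z:h^t_m(z)\le0,\ m\in[M]\}$ with each $h^t_m$ convex and twice continuously differentiable. Both problems have strongly convex objectives and unique minimizers. *)

theory Defs
  imports "HOL-Analysis.Analysis"
begin

text \<open>Matrices in R^{J x K} are modelled as real^'k^'j (J = CARD('j), K = CARD('k));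
  the inner product of this type is exactly the Frobenius inner product.\<close>

type_synonym ('j, 'k) mat = "real ^ 'k ^ 'j"

definition twice_cont_diff :: "('a::euclidean_space \<Rightarrow> real) \<Rightarrow> bool" where
  "twice_cont_diff h \<longleftrightarrow>
     (\<exists>(Df :: 'a \<Rightarrow> ('a \<Rightarrow>\<^sub>L real)) (D2f :: 'a \<Rightarrow> ('a \<Rightarrow>\<^sub>L ('a \<Rightarrow>\<^sub>L real))).
        (\<forall>z. (h has_derivative blinfun_apply (Df z)) (at z)) \<and>
        (\<forall>z. (Df has_derivative blinfun_apply (D2f z)) (at z)) \<and>
        continuous_on UNIV D2f)"

text \<open>The local objective Phi(z) = <g, z> + rho/2 * || w - z + (1/rho)(lam - xi) ||^2,
  where g is the subgradient f'_p(z^t_p; D_p).\<close>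
definition Phi :: "'a::real_inner \<Rightarrow> 'a \<Rightarrow> 'a \<Rightarrow> 'a \<Rightarrow> real \<Rightarrow> 'a \<Rightarrow> real" where
  "Phi g w lam xi rho z = inner g z + rho / 2 * (norm (w - z + (1 / rho) *\<^sub>R (lam - xi)))\<^sup>2"

definition softplus_penalty :: "(nat \<Rightarrow> 'a \<Rightarrow> real) \<Rightarrow> nat \<Rightarrow> real \<Rightarrow> 'a \<Rightarrow> real" where
  "softplus_penalty h M l z = (\<Sum>m\<in>{1..M}. ln (1 + exp (l * h m z)))"

end

theory Submission
  imports Defs
begin

definition sp :: "real \<Rightarrow> real" where "sp u = ln (1 + exp u)"

lemma sp_nonneg: "0 \<le> sp u"
  unfolding sp_def by (simp add: add_pos_pos)

lemma sp_ge: "u \<le> sp u"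
proof -
  have "u = ln (exp u)" by simp
  also have "\<dots> \<le> ln (1 + exp u)" by (subst ln_le_cancel_iff) (auto simp: add_pos_pos)
  finally show ?thesis unfolding sp_def .
qed

lemma sp_mono: "u \<le> w \<Longrightarrow> sp u \<le> sp w"
  unfolding sp_def by (subst ln_le_cancel_iff) (auto simp: add_pos_pos)

lemma sp_le_ln2: "u \<le> 0 \<Longrightarrow> sp u \<le> ln 2"
  unfolding sp_def by (subst ln_le_cancel_iff) (auto simp: add_pos_pos)

lemma sp_le_exp: "sp u \<le> exp u"
  unfolding sp_def by (rule ln_add_one_self_le_self) simp

lemma sp_mid: "sp ((u + w) / 2) \<le> (sp u + sp w) / 2"
proof -
  define a where "a = exp (u/2)"
  define b where "b = exp (w/2)"
  have ea: "exp u = a * a" unfolding a_def by (simp flip: exp_add)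
  have eb: "exp w = b * b" unfolding b_def by (simp flip: exp_add)
  have eab: "exp ((u + w)/2) = a * b" unfolding a_def b_def by (simp flip: exp_add add: add_divide_distrib)
  have "(1 + a*b) * (1 + a*b) \<le> (1 + a*a) * (1 + b*b)"
  proof -
    have e: "(1 + a*b) * (1 + a*b) = (1 + a*a) * (1 + b*b) - (a - b) * (a - b)"
      by (simp add: algebra_simps)
    have "0 \<le> (a - b) * (a - b)" by simp
    then show ?thesis unfolding e by linarith
  qed
  have pos: "0 < 1 + a * b" unfolding a_def b_def by (simp add: add_pos_pos)
  have "2 * sp ((u + w) / 2) = ln ((1 + a*b) * (1 + a*b))"
    unfolding sp_def eab using pos by (simp add: ln_mult)
  also have "\<dots> \<le> ln ((1 + a*a) * (1 + b*b))"
    using \<open>(1 + a*b) * (1 + a*b) \<le> (1 + a*a) * (1 + b*b)\<close> pos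
    by (subst ln_le_cancel_iff) (auto intro!: mult_pos_pos add_pos_nonneg)
  also have "\<dots> = sp u + sp w"
  proof -
    have "0 < 1 + a*a" "0 < 1 + b*b" by (simp_all add: add_pos_nonneg)
    then show ?thesis by (simp add: ln_mult sp_def ea eb)
  qed
  finally show ?thesis by simp
qed

lemma sp_cont: "continuous_on UNIV sp"
  unfolding sp_def by (intro continuous_intros) (auto, smt (verit) exp_gt_zero)

lemma convex_tangent:
  fixes h :: "'a::real_normed_vector \<Rightarrow> real"
  assumes cv: "convex_on UNIV h" and dh: "(h has_derivative D) (at a)"
  shows "h a + D (x - a) \<le> h x"
proof -
  define d where "d = x - a"
  define \<phi> where "\<phi> t = h (a + t *\<^sub>R d)" for t :: real
  have lin: "linear D" using dh by (rule has_derivative_linear)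
  have cphi: "convex_on UNIV \<phi>"
  proof (rule convex_onI)
    fix t s :: real and u :: real assume "0 < u" "u < 1"
    have "a + ((1 - u) *\<^sub>R t + u *\<^sub>R s) *\<^sub>R d = (1 - u) *\<^sub>R (a + t *\<^sub>R d) + u *\<^sub>R (a + s *\<^sub>R d)"
      by (simp add: algebra_simps)
    then show "\<phi> ((1 - u) *\<^sub>R t + u *\<^sub>R s) \<le> (1 - u) * \<phi> t + u * \<phi> s"
      unfolding \<phi>_def using convex_onD[OF cv, of u "a + t *\<^sub>R d" "a + s *\<^sub>R d"] \<open>0<u\<close> \<open>u<1\<close> by simp
  qed simp
  have "((\<lambda>t. a + t *\<^sub>R d) has_derivative (\<lambda>t. t *\<^sub>R d)) (at 0)"
    by (auto intro!: derivative_eq_intros)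
  moreover have "(h has_derivative D) (at ((\<lambda>t. a + t *\<^sub>R d) 0))" using dh by simp
  ultimately have "(\<phi> has_derivative (\<lambda>t. D (t *\<^sub>R d))) (at 0)"
    unfolding \<phi>_def by (rule has_derivative_compose[of "\<lambda>t. a + t *\<^sub>R d", unfolded o_def])
  moreover have "(\<lambda>t. D (t *\<^sub>R d)) = (*) (D d)"
    using linear_scale[OF lin] by (auto simp: fun_eq_iff)
  ultimately have "(\<phi> has_field_derivative D d) (at 0)"
    by (simp add: has_field_derivative_def)
  then have "(\<phi> has_field_derivative D d) (at 0 within UNIV)" by simp
  from convex_on_imp_above_tangent[OF cphi _ _ _ this, of 1]
  have "\<phi> 1 - \<phi> 0 \<ge> D d * (1 - 0)" by simp
  then show ?thesis unfolding \<phi>_def d_def by simp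
qed

lemma line_limit:
  fixes h :: "'a::real_normed_vector \<Rightarrow> real"
  assumes dh: "(h has_derivative D) (at a)"
  shows "((\<lambda>l. l * (h (a + (1/l) *\<^sub>R v) - h a)) \<longlongrightarrow> D v) at_top"
proof -
  define \<phi> where "\<phi> t = h (a + t *\<^sub>R v)" for t :: real
  have lin: "linear D" using dh by (rule has_derivative_linear)
  have "((\<lambda>t. a + t *\<^sub>R v) has_derivative (\<lambda>t. t *\<^sub>R v)) (at 0)"
    by (auto intro!: derivative_eq_intros)
  moreover have "(h has_derivative D) (at ((\<lambda>t. a + t *\<^sub>R v) 0))" using dh by simp
  ultimately have "(\<phi> has_derivative (\<lambda>t. D (t *\<^sub>R v))) (at 0)"
    unfolding \<phi>_def by (rule has_derivative_compose[of "\<lambda>t. a + t *\<^sub>R v", unfolded o_def])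
  moreover have "(\<lambda>t. D (t *\<^sub>R v)) = (*) (D v)"
    using linear_scale[OF lin] by (auto simp: fun_eq_iff)
  ultimately have "(\<phi> has_field_derivative D v) (at 0)"
    by (simp add: has_field_derivative_def)
  then have "((\<lambda>t. (\<phi> t - \<phi> 0) / (t - 0)) \<longlongrightarrow> D v) (at 0)"
    by (simp add: has_field_derivative_iff)
  then have L: "((\<lambda>t. (\<phi> t - \<phi> 0) / (t - 0)) \<longlongrightarrow> D v) (at_right 0)"
    by (rule tendsto_mono[rotated]) (simp add: at_le)
  have "((\<lambda>l. (\<lambda>t. (\<phi> t - \<phi> 0) / (t - 0)) (inverse l)) \<longlongrightarrow> D v) at_top"
    by (rule filterlim_compose[OF L filterlim_inverse_at_right_top])
  moreover have "eventually (\<lambda>l. (\<lambda>t. (\<phi> t - \<phi> 0) / (t - 0)) (inverse l) = l * (h (a + (1/l) *\<^sub>R v) - h a)) at_top"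
    using eventually_gt_at_top[of 0]
    by eventually_elim (simp add: \<phi>_def inverse_eq_divide mult.commute)
  ultimately show ?thesis by (rule Lim_transform_eventually)
qed

lemma Phi_alt:
  "Phi g w lam xi rho z = inner g z + rho / 2 * (norm ((w + (1 / rho) *\<^sub>R (lam - xi)) - z))\<^sup>2"
  unfolding Phi_def by (simp add: algebra_simps)

lemma Phi_mid:
  fixes a b :: "'a::real_inner"
  shows "Phi g w lam xi rho ((1/2) *\<^sub>R (a + b)) =
    (Phi g w lam xi rho a + Phi g w lam xi rho b) / 2 - rho / 8 * (norm (a - b))\<^sup>2"
proof -
  define c where "c = w + (1 / rho) *\<^sub>R (lam - xi)"
  have N: "(norm (c - (1/2) *\<^sub>R (a + b)))\<^sup>2 = ((norm (c - a))\<^sup>2 + (norm (c - b))\<^sup>2) / 2 - (norm (a - b))\<^sup>2 / 4"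
    unfolding power2_norm_eq_inner by (simp add: inner_simps inner_commute field_simps)
  have I: "inner g ((1/2) *\<^sub>R (a + b)) = (inner g a + inner g b) / 2"
    by (simp add: inner_simps)
  have "Phi g w lam xi rho ((1/2) *\<^sub>R (a + b)) = (inner g a + inner g b) / 2 + rho / 2 * (((norm (c - a))\<^sup>2 + (norm (c - b))\<^sup>2) / 2 - (norm (a - b))\<^sup>2 / 4)"
    unfolding Phi_alt c_def[symmetric] N I by simp
  then show ?thesis unfolding Phi_alt c_def[symmetric] by (simp add: field_simps)
qed

lemma Phi_lower:
  fixes z :: "'a::real_inner"
  assumes rho: "rho > 0"
  shows "rho / 4 * (norm (z - (w + (1 / rho) *\<^sub>R (lam - xi))))\<^sup>2 - norm g * norm (w + (1 / rho) *\<^sub>R (lam - xi)) - (norm g)\<^sup>2 / rho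
     \<le> Phi g w lam xi rho z"
proof -
  define c where "c = w + (1 / rho) *\<^sub>R (lam - xi)"
  define r where "r = norm (z - c)"
  define G where "G = norm g"
  have "norm z \<le> norm c + r" unfolding r_def using norm_triangle_ineq[of c "z - c"] by simp
  have "- (G * norm z) \<le> inner g z" unfolding G_def
    using Cauchy_Schwarz_ineq2[of g z] by linarith
  moreover have "G * norm z \<le> G * norm c + G * r"
    using \<open>norm z \<le> norm c + r\<close> G_def by (simp add: mult_left_mono distrib_left[symmetric])
  moreover have "rho / 4 * r\<^sup>2 - G\<^sup>2 / rho \<le> rho / 2 * r\<^sup>2 - G * r"
  proof -
    have "rho / 2 * r\<^sup>2 - G * r - (rho / 4 * r\<^sup>2 - G\<^sup>2 / rho) = (rho / 2 * r - G)\<^sup>2 / rho"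
      using rho by (simp add: power2_eq_square field_simps)
    moreover have "0 \<le> (rho / 2 * r - G)\<^sup>2 / rho" using rho by simp
    ultimately show ?thesis by linarith
  qed
  moreover have "Phi g w lam xi rho z = inner g z + rho / 2 * r\<^sup>2"
    unfolding Phi_alt c_def[symmetric] r_def by (simp add: norm_minus_commute)
  ultimately show ?thesis unfolding c_def[symmetric] r_def[symmetric] G_def[symmetric]
    by linarith
qed

lemma Phi_cont: "continuous_on UNIV (Phi g w lam xi rho)"
  unfolding Phi_def by (intro continuous_intros)

lemma aux_lin:
  fixes X p Fm Pm T U Y q :: real
  shows "X + p \<le> Fm + Pm \<Longrightarrow> T = 2 * U \<Longrightarrow> Pm \<le> (p + q) / 2 \<Longrightarrow> Fm = (X + Y) / 2 - U
    \<Longrightarrow> X + p + T \<le> Y + q"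
  by (simp add: field_simps)

theorem proposition4:
  fixes W :: "('j::finite, 'k::finite) mat set"
    and g w lam xi zp :: "('j, 'k) mat"
    and rho delta :: real
    and M :: nat
    and h :: "nat \<Rightarrow> ('j, 'k) mat \<Rightarrow> real"
    and zstar :: "('j, 'k) mat"
    and zl :: "real \<Rightarrow> ('j, 'k) mat"
  assumes rho_pos: "rho > 0" and delta_pos: "delta > 0"
    and W_compact: "compact W" and W_convex: "convex W"
    and h_convex: "\<And>m. m \<in> {1..M} \<Longrightarrow> convex_on UNIV (h m)"
    and h_C2: "\<And>m. m \<in> {1..M} \<Longrightarrow> twice_cont_diff (h m)"
    and feasible: "W \<inter> cball zp delta = {z. \<forall>m\<in>{1..M}. h m z \<le> 0}"
    and zstar_min: "is_arg_min (Phi g w lam xi rho) (\<lambda>z. z \<in> W \<inter> cball zp delta) zstar"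
    and zl_min: "\<And>l. l > 0 \<Longrightarrow>
        is_arg_min (\<lambda>z. Phi g w lam xi rho z + softplus_penalty h M l z) (\<lambda>z. True) (zl l)"
  shows "(zl \<longlongrightarrow> zstar) at_top"
proof -
  define \<Phi> where "\<Phi> = Phi g w lam xi rho"
  define P where "P l z = (\<Sum>m\<in>{1..M}. sp (l * h m z))" for l z
  have P_eq: "softplus_penalty h M l z = P l z" for l z
    unfolding softplus_penalty_def P_def sp_def ..
  define c where "c = w + (1 / rho) *\<^sub>R (lam - xi)"
  define \<Phi>low where "\<Phi>low = - (norm g * norm c) - (norm g)\<^sup>2 / rho"
  have \<Phi>_low: "\<Phi>low \<le> \<Phi> z" for z
  proof -
    have "0 \<le> rho / 4 * (norm (z - c))\<^sup>2" using rho_pos by simp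
    then show ?thesis using Phi_lower[OF rho_pos, of z w lam xi g]
      unfolding \<Phi>_def \<Phi>low_def c_def by linarith
  qed
  have \<Phi>_cont: "continuous_on UNIV \<Phi>" unfolding \<Phi>_def by (rule Phi_cont)
  have zs: "zstar \<in> W \<inter> cball zp delta \<and> (\<forall>y. y \<in> W \<inter> cball zp delta \<longrightarrow> \<Phi> zstar \<le> \<Phi> y)"
    using zstar_min unfolding is_arg_min_linorder \<Phi>_def by blast
  have zstarF: "\<forall>m\<in>{1..M}. h m zstar \<le> 0" using zs feasible by blast
  have zstar_opt: "\<Phi> zstar \<le> \<Phi> y" if "\<forall>m\<in>{1..M}. h m y \<le> 0" for y
    using zs feasible that by blast
  have zl_opt: "\<Phi> (zl l) + P l (zl l) \<le> \<Phi> y + P l y" if "l > 0" for l y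
    using zl_min[OF that] unfolding is_arg_min_linorder \<Phi>_def P_eq by blast
  have hder: "\<exists>D. (h m has_derivative D) (at x)" if "m \<in> {1..M}" for m x
    using h_C2[OF that] unfolding twice_cont_diff_def by blast
  have hcont: "continuous_on UNIV (h m)" if "m \<in> {1..M}" for m
    using hder[OF that] has_derivative_continuous by (intro continuous_at_imp_continuous_on) blast
  define Dm where "Dm m = (SOME D. (h m has_derivative D) (at zstar))" for m
  have hD: "(h m has_derivative Dm m) (at zstar)" if "m \<in> {1..M}" for m
    unfolding Dm_def using hder[OF that] by (rule someI_ex)
  define S where "S v = (\<Sum>m\<in>{1..M}. if h m zstar = 0 then sp (Dm m v) else 0)" for v
  have S_nonneg: "0 \<le> S v" for v unfolding S_def by (intro sum_nonneg) (simp add: sp_nonneg)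
  define s0 where "s0 = Inf (range S)"
  have bdd: "bdd_below (range S)" unfolding bdd_below_def using S_nonneg by auto
  have S_ge: "s0 \<le> S v" for v unfolding s0_def by (rule cInf_lower[OF _ bdd]) simp
  have P_ge: "s0 \<le> P l x" if l: "l > 0" for l x
  proof -
    have "S (l *\<^sub>R (x - zstar)) \<le> P l x" unfolding S_def P_def
    proof (rule sum_mono)
      fix m assume m: "m \<in> {1..M}"
      show "(if h m zstar = 0 then sp (Dm m (l *\<^sub>R (x - zstar))) else 0) \<le> sp (l * h m x)"
      proof (cases "h m zstar = 0")
        case True
        have "h m zstar + Dm m (x - zstar) \<le> h m x"
          by (rule convex_tangent[OF h_convex[OF m] hD[OF m]])
        moreover have "Dm m (l *\<^sub>R (x - zstar)) = l * Dm m (x - zstar)"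
          using linear_scale[OF has_derivative_linear[OF hD[OF m]]] by simp
        ultimately have "Dm m (l *\<^sub>R (x - zstar)) \<le> l * h m x"
          using True l by (simp add: mult_left_mono)
        then show ?thesis using True by (simp add: sp_mono)
      next
        case False then show ?thesis by (simp add: sp_nonneg)
      qed
    qed
    then show ?thesis using S_ge[of "l *\<^sub>R (x - zstar)"] by linarith
  qed
  have sc: "\<Phi> (zl l) + P l (zl l) + rho / 4 * (norm (y - zl l))\<^sup>2 \<le> \<Phi> y + P l y"
    if l: "l > 0" for l y
  proof -
    define a where "a = zl l"
    define mid where "mid = (1/2) *\<^sub>R (a + y)"
    have Pm: "P l mid \<le> (P l a + P l y) / 2"
    proof -
      have "P l mid \<le> (\<Sum>m\<in>{1..M}. (sp (l * h m a) + sp (l * h m y)) / 2)" unfolding P_def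
      proof (rule sum_mono)
        fix m assume m: "m \<in> {1..M}"
        have "h m mid \<le> (1 - 1/2) * h m a + (1/2) * h m y"
          using convex_onD[OF h_convex[OF m], of "1/2" a y] unfolding mid_def
          by (simp add: scaleR_add_right)
        then have "l * h m mid \<le> l * ((h m a + h m y) / 2)"
          using l by (intro mult_left_mono) auto
        then have "l * h m mid \<le> (l * h m a + l * h m y) / 2"
          by (simp add: algebra_simps)
        then have "sp (l * h m mid) \<le> sp ((l * h m a + l * h m y) / 2)" by (rule sp_mono)
        also have "\<dots> \<le> (sp (l * h m a) + sp (l * h m y)) / 2" by (rule sp_mid)
        finally show "sp (l * h m mid) \<le> (sp (l * h m a) + sp (l * h m y)) / 2" .
      qed
      also have "\<dots> = (P l a + P l y) / 2" unfolding P_def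
        by (simp only: sum_divide_distrib[symmetric] sum.distrib)
      finally show ?thesis .
    qed
    have \<Phi>m: "\<Phi> mid = (\<Phi> a + \<Phi> y) / 2 - rho / 8 * (norm (a - y))\<^sup>2"
      unfolding \<Phi>_def mid_def by (rule Phi_mid)
    have "\<Phi> a + P l a \<le> \<Phi> mid + P l mid" unfolding a_def by (rule zl_opt[OF l])
    moreover have "rho / 4 * (norm (y - a))\<^sup>2 = 2 * (rho / 8 * (norm (a - y))\<^sup>2)"
      by (simp add: norm_minus_commute)
    ultimately have "\<Phi> a + P l a + rho / 4 * (norm (y - a))\<^sup>2 \<le> \<Phi> y + P l y"
      using Pm \<Phi>m by (rule aux_lin)
    then show ?thesis unfolding a_def .
  qed
  define K0 where "K0 = \<Phi> zstar + real M * ln 2 - \<Phi>low"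
  have Pstar: "P l zstar \<le> real M * ln 2" if l: "l > 0" for l
  proof -
    have "P l zstar \<le> of_nat (card {1..M}) * ln 2" unfolding P_def
    proof (rule sum_bounded_above)
      fix m assume "m \<in> {1..M}"
      then have "h m zstar \<le> 0" using zstarF by blast
      then have "l * h m zstar \<le> 0" using l by (simp add: mult_nonneg_nonpos)
      then show "sp (l * h m zstar) \<le> ln 2" by (rule sp_le_ln2)
    qed
    then show ?thesis by simp
  qed
  have PK: "P l (zl l) \<le> K0" if l: "l > 0" for l
    using zl_opt[OF l, of zstar] Pstar[OF l] \<Phi>_low[of "zl l"] unfolding K0_def by linarith
  have P_nonneg: "0 \<le> P l x" for l x unfolding P_def by (intro sum_nonneg) (simp add: sp_nonneg)
  have K0_nonneg: "0 \<le> K0" using PK[of 1] P_nonneg[of 1 "zl 1"] by simp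
  have hzl: "h m (zl l) \<le> K0 / l" if l: "l > 0" and m: "m \<in> {1..M}" for l m
  proof -
    have "sp (l * h m (zl l)) \<le> P l (zl l)" unfolding P_def
      by (rule member_le_sum) (use m in \<open>auto simp: sp_nonneg\<close>)
    then have "l * h m (zl l) \<le> K0" using sp_ge[of "l * h m (zl l)"] PK[OF l] by linarith
    then show ?thesis using l by (simp add: field_simps)
  qed
  have \<Phi>lim: "eventually (\<lambda>l. \<Phi> zstar - \<eta> < \<Phi> (zl l)) at_top" if \<eta>: "\<eta> > 0" for \<eta>
  proof -
    define C where "C = {x. \<Phi> x \<le> \<Phi> zstar - \<eta>}"
    show ?thesis
    proof (cases "C = {}")
      case True
      then have "\<forall>x. \<Phi> zstar - \<eta> < \<Phi> x" unfolding C_def by (auto simp: not_le)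
      then show ?thesis by simp
    next
      case False
      have closedC: "closed C" unfolding C_def
        by (rule closed_Collect_le[OF \<Phi>_cont continuous_on_const])
      define Kb where "Kb = 4 * (\<Phi> zstar - \<eta> - \<Phi>low) / rho"
      have "C \<subseteq> cball c (1 + abs Kb)"
      proof
        fix x assume "x \<in> C"
        then have "\<Phi> x \<le> \<Phi> zstar - \<eta>" by (simp add: C_def)
        moreover have "rho / 4 * (norm (x - c))\<^sup>2 - norm g * norm c - (norm g)\<^sup>2 / rho \<le> \<Phi> x"
          using Phi_lower[OF rho_pos, of x w lam xi g] unfolding \<Phi>_def c_def .
        ultimately have "rho / 4 * (norm (x - c))\<^sup>2 \<le> \<Phi> zstar - \<eta> - \<Phi>low"
          unfolding \<Phi>low_def by linarith
        then have r2: "(norm (x - c))\<^sup>2 \<le> Kb" unfolding Kb_def using rho_pos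
          by (simp add: field_simps)
        have "norm (x - c) \<le> 1 + abs Kb"
        proof (cases "norm (x - c) \<le> 1")
          case True then show ?thesis by simp
        next
          case False
          then have "1 \<le> norm (x - c)" by simp
          then have "norm (x - c) * 1 \<le> norm (x - c) * norm (x - c)"
            by (intro mult_left_mono) simp_all
          then have "norm (x - c) \<le> (norm (x - c))\<^sup>2"
            by (simp add: power2_eq_square)
          then show ?thesis using r2 by linarith
        qed
        then show "x \<in> cball c (1 + abs Kb)" by (simp add: dist_norm norm_minus_commute)
      qed
      then have "bounded C" using bounded_cball bounded_subset by blast
      then have compC: "compact C" using closedC by (simp add: compact_eq_bounded_closed)
      define gs where "gs x = (\<Sum>m\<in>{1..M}. max 0 (h m x))" for x
      have gs_cont: "continuous_on C gs" unfolding gs_def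
        by (intro continuous_on_sum continuous_on_max continuous_on_const
            continuous_on_subset[OF hcont]) auto
      obtain x0 where x0: "x0 \<in> C" "\<And>y. y \<in> C \<Longrightarrow> gs x0 \<le> gs y"
        using continuous_attains_inf[OF compC False gs_cont] by blast
      have gs0: "gs x0 > 0"
      proof (rule ccontr)
        assume "\<not> gs x0 > 0"
        moreover have "gs x0 \<ge> 0" unfolding gs_def by (intro sum_nonneg) simp
        ultimately have "gs x0 = 0" by simp
        then have "\<forall>m\<in>{1..M}. max 0 (h m x0) = 0" unfolding gs_def
          by (subst (asm) sum_nonneg_eq_0_iff) auto
        then have "\<forall>m\<in>{1..M}. h m x0 \<le> 0" by (auto simp: max_def split: if_splits)
        then have "\<Phi> zstar \<le> \<Phi> x0" by (rule zstar_opt)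
        moreover have "\<Phi> x0 \<le> \<Phi> zstar - \<eta>" using x0(1) by (simp add: C_def)
        ultimately show False using \<eta> by linarith
      qed
      have "eventually (\<lambda>l. l > max 0 (real M * K0 / gs x0)) at_top" by (rule eventually_gt_at_top)
      then show ?thesis
      proof eventually_elim
        fix l assume "l > max 0 (real M * K0 / gs x0)"
        then have l0: "l > 0" and lK: "real M * K0 / gs x0 < l" by auto
        have "gs (zl l) \<le> of_nat (card {1..M}) * (K0 / l)" unfolding gs_def
          by (rule sum_bounded_above) (use hzl[OF l0] K0_nonneg l0 in auto)
        also have "\<dots> = real M * K0 / l" by simp
        also have "\<dots> < gs x0" using lK gs0 l0 by (simp add: field_simps)
        finally have "zl l \<notin> C" using x0(2) by force
        then show "\<Phi> zstar - \<eta> < \<Phi> (zl l)" by (simp add: C_def)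
      qed
    qed
  qed
  have pt_lim: "((\<lambda>l. zstar + (1/l) *\<^sub>R v) \<longlongrightarrow> zstar) at_top" for v
  proof -
    have "((\<lambda>l. 1 / l) \<longlongrightarrow> (0::real)) at_top"
      by (rule tendsto_divide_0[OF tendsto_const filterlim_at_top_imp_at_infinity[OF filterlim_ident]])
    then have "((\<lambda>l. (1/l) *\<^sub>R v) \<longlongrightarrow> 0 *\<^sub>R v) at_top"
      by (intro tendsto_scaleR tendsto_const)
    then have "((\<lambda>l. zstar + (1/l) *\<^sub>R v) \<longlongrightarrow> zstar + 0 *\<^sub>R v) at_top"
      by (intro tendsto_add tendsto_const)
    then show ?thesis by simp
  qed
  have rec: "((\<lambda>l. P l (zstar + (1/l) *\<^sub>R v)) \<longlongrightarrow> S v) at_top" for v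
    unfolding P_def S_def
  proof (rule tendsto_sum)
    fix m assume m: "m \<in> {1..M}"
    show "((\<lambda>l. sp (l * h m (zstar + (1/l) *\<^sub>R v))) \<longlongrightarrow>
        (if h m zstar = 0 then sp (Dm m v) else 0)) at_top"
    proof (cases "h m zstar = 0")
      case True
      have "((\<lambda>l. l * (h m (zstar + (1/l) *\<^sub>R v) - h m zstar)) \<longlongrightarrow> Dm m v) at_top"
        by (rule line_limit[OF hD[OF m]])
      then have "((\<lambda>l. l * h m (zstar + (1/l) *\<^sub>R v)) \<longlongrightarrow> Dm m v) at_top" using True by simp
      then have "((\<lambda>l. sp (l * h m (zstar + (1/l) *\<^sub>R v))) \<longlongrightarrow> sp (Dm m v)) at_top"
        by (rule isCont_tendsto_compose[rotated])
          (use sp_cont in \<open>simp add: continuous_on_eq_continuous_at\<close>)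
      then show ?thesis using True by simp
    next
      case False
      then have neg: "h m zstar < 0" using zstarF m by force
      have "((\<lambda>l. h m (zstar + (1/l) *\<^sub>R v)) \<longlongrightarrow> h m zstar) at_top"
        by (rule isCont_tendsto_compose[OF _ pt_lim])
          (use hcont[OF m] in \<open>simp add: continuous_on_eq_continuous_at\<close>)
      then have "filterlim (\<lambda>l. h m (zstar + (1/l) *\<^sub>R v) * l) at_bot at_top"
        by (rule filterlim_tendsto_neg_mult_at_bot[OF _ neg filterlim_ident])
      then have bot: "filterlim (\<lambda>l. l * h m (zstar + (1/l) *\<^sub>R v)) at_bot at_top"
        by (simp add: mult.commute)
      have E: "((\<lambda>l. exp (l * h m (zstar + (1/l) *\<^sub>R v))) \<longlongrightarrow> 0) at_top"
        by (rule filterlim_compose[OF exp_at_bot bot])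
      have "((\<lambda>l. sp (l * h m (zstar + (1/l) *\<^sub>R v))) \<longlongrightarrow> 0) at_top"
        by (rule tendsto_sandwich[OF _ _ tendsto_const E]) (auto simp: sp_nonneg sp_le_exp)
      then show ?thesis using False by simp
    qed
  qed
  show ?thesis
    unfolding tendsto_iff
  proof (intro allI impI)
    fix e :: real assume e: "e > 0"
    define \<delta> where "\<delta> = rho * e\<^sup>2 / 100"
    have \<delta>: "\<delta> > 0" using rho_pos e by (simp add: \<delta>_def)
    obtain v where v: "S v < s0 + \<delta>"
      using cInf_lessD[of "range S" "s0 + \<delta>"] \<delta> unfolding s0_def by auto
    have ev1: "eventually (\<lambda>l. \<Phi> zstar - \<delta> < \<Phi> (zl l)) at_top" by (rule \<Phi>lim[OF \<delta>])
    have "((\<lambda>l. \<Phi> (zstar + (1/l) *\<^sub>R v)) \<longlongrightarrow> \<Phi> zstar) at_top"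
      by (rule isCont_tendsto_compose[OF _ pt_lim])
        (use \<Phi>_cont in \<open>simp add: continuous_on_eq_continuous_at\<close>)
    then have ev2: "eventually (\<lambda>l. \<Phi> (zstar + (1/l) *\<^sub>R v) < \<Phi> zstar + \<delta>) at_top"
      by (rule order_tendstoD(2)) (use \<delta> in simp)
    have ev3: "eventually (\<lambda>l. P l (zstar + (1/l) *\<^sub>R v) < S v + \<delta>) at_top"
      by (rule order_tendstoD(2)[OF rec[of v]]) (use \<delta> in simp)
    have "((\<lambda>l. dist (zstar + (1/l) *\<^sub>R v) zstar) \<longlongrightarrow> dist zstar zstar) at_top"
      by (intro tendsto_dist pt_lim tendsto_const)
    then have "((\<lambda>l. dist (zstar + (1/l) *\<^sub>R v) zstar) \<longlongrightarrow> 0) at_top" by simp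
    then have ev4: "eventually (\<lambda>l. dist (zstar + (1/l) *\<^sub>R v) zstar < e / 2) at_top"
      by (rule order_tendstoD(2)) (use e in simp)
    show "eventually (\<lambda>l. dist (zl l) zstar < e) at_top"
      using ev1 ev2 ev3 ev4 eventually_gt_at_top[of 0]
    proof eventually_elim
      fix l assume A: "\<Phi> zstar - \<delta> < \<Phi> (zl l)" "\<Phi> (zstar + (1/l) *\<^sub>R v) < \<Phi> zstar + \<delta>"
        "P l (zstar + (1/l) *\<^sub>R v) < S v + \<delta>" "dist (zstar + (1/l) *\<^sub>R v) zstar < e / 2" "0 < l"
      define y where "y = zstar + (1/l) *\<^sub>R v"
      have B1: "\<Phi> (zl l) + P l (zl l) + rho / 4 * (norm (y - zl l))\<^sup>2 \<le> \<Phi> y + P l y"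
        by (rule sc[OF A(5)])
      have B2: "s0 \<le> P l (zl l)" by (rule P_ge[OF A(5)])
      have B3: "\<Phi> y < \<Phi> zstar + \<delta>" "P l y < S v + \<delta>" using A(2,3) unfolding y_def by auto
      have "rho / 4 * (norm (y - zl l))\<^sup>2 \<le> 4 * \<delta>"
        using B1 B2 B3 A(1) v by linarith
      then have "(norm (y - zl l))\<^sup>2 \<le> 16 * \<delta> / rho" using rho_pos by (simp add: field_simps)
      also have "\<dots> = (4/10 * e)\<^sup>2" unfolding \<delta>_def using rho_pos
        by (simp add: power2_eq_square field_simps)
      finally have sq: "(norm (y - zl l))\<^sup>2 \<le> (4/10 * e)\<^sup>2" .
      have "norm (y - zl l) \<le> 4/10 * e" by (rule power2_le_imp_le[OF sq]) (use e in simp)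
      then have "dist (zl l) y < e / 2" using e by (simp add: dist_norm norm_minus_commute)
      then show "dist (zl l) zstar < e"
      proof -
        have "dist y zstar < e / 2" using A(4) unfolding y_def .
        moreover have "dist (zl l) zstar \<le> dist (zl l) y + dist y zstar" by (rule dist_triangle)
        ultimately show ?thesis using \<open>dist (zl l) y < e / 2\<close> by linarith
      qed
    qed
  qed
qed

end
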